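(* Let $f:\mathbb N\to(0,\infty)$ with $f(n)\to\infty$. There exists a critical offspring distribution $\mu$ such that \[ \limsup_{n\to\infty}\mathbf P\Big(\Delta(\mathrm T_n(\mu))>\frac{n}{f(n)}\Big)=1, \] where the limit superior runs over all $n$ with $\mathbf P(|\mathrm T(\mu)|=n)>0$.
   Context: An offspring distribution is a probability measure $\mu=(\mu_k)_{k\ge0}$ on $\mathbb Z_+$; it is critical if $\sum_kk\mu_k=1$. $\mathrm T(\mu)$ is a $\mu$-Bienaymé (Galton–Watson) tree and $\mathrm T_n(\mu)$ is $\mathrm T(\mu)$ conditioned to have exactly $n$ vertices. For a tree $\mathrm t$, $\Delta(\mathrm t)$ is the maximal number of children of a vertex of $\mathrm t$. *)

theory Defs
  imports Complex_Main
begin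

datatype ptree = Node "ptree list"

fun tsize :: "ptree \<Rightarrow> nat" where
  "tsize (Node ts) = Suc (sum_list (map tsize ts))"

fun maxdeg :: "ptree \<Rightarrow> nat" where
  "maxdeg (Node ts) = fold max (map maxdeg ts) (length ts)"

text \<open>Probability that a mu-Bienayme tree equals the plane tree t:
  the product over vertices of mu(number of children).\<close>
fun gw_weight :: "(nat \<Rightarrow> real) \<Rightarrow> ptree \<Rightarrow> real" where
  "gw_weight mu (Node ts) = mu (length ts) * prod_list (map (gw_weight mu) ts)"

definition offspring_distr :: "(nat \<Rightarrow> real) \<Rightarrow> bool" where
  "offspring_distr mu \<longleftrightarrow> (\<forall>k. 0 \<le> mu k) \<and> mu sums 1"

definition critical :: "(nat \<Rightarrow> real) \<Rightarrow> bool" where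
  "critical mu \<longleftrightarrow> offspring_distr mu \<and> (\<lambda>k. real k * mu k) sums 1"

definition size_prob :: "(nat \<Rightarrow> real) \<Rightarrow> nat \<Rightarrow> real" where
  "size_prob mu n = (\<Sum>t\<in>{t. tsize t = n}. gw_weight mu t)"

text \<open>P(P(T_n(mu))), for T_n(mu) = T(mu) conditioned on |T(mu)| = n.\<close>
definition cond_prob :: "(nat \<Rightarrow> real) \<Rightarrow> nat \<Rightarrow> (ptree \<Rightarrow> bool) \<Rightarrow> real" where
  "cond_prob mu n P =
     (\<Sum>t\<in>{t. tsize t = n \<and> P t}. gw_weight mu t) / size_prob mu n"

end

theory Submission
  imports Defs
begin
fun fpre :: "ptree list \<Rightarrow> nat list" where
  "fpre [] = []"
| "fpre (Node cs # ts) = length cs # fpre (cs @ ts)"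

lemma tsize_pos: "tsize t \<ge> 1"
  by (cases t) auto

lemma sum_tsize_ge: "sum_list (map tsize ts) \<ge> length ts"
proof (induction ts)
  case (Cons a ts) then show ?case using tsize_pos[of a] by simp
qed simp

lemma fpre_length: "length (fpre ts) = sum_list (map tsize ts)"
  by (induction ts rule: fpre.induct) auto

lemma fpre_sum: "sum_list (fpre ts) + length ts = length (fpre ts)"
  by (induction ts rule: fpre.induct) auto

lemma fpre_prod: "prod_list (map mu (fpre ts)) = prod_list (map (gw_weight mu) ts)"
  by (induction ts rule: fpre.induct) (auto simp: mult.assoc)

lemma fpre_inj_aux: "fpre ts @ xs = fpre us @ ys \<Longrightarrow> length ts = length us \<Longrightarrow> ts = us \<and> xs = ys"
proof (induction ts arbitrary: us xs ys rule: fpre.induct)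
  case 1
  then show ?case by simp
next
  case (2 cs ts)
  then obtain c' us' where u: "us = Node c' # us'"
    by (cases us) (auto, metis ptree.exhaust)
  from 2(2) u have l: "length cs = length c'" and e: "fpre (cs @ ts) @ xs = fpre (c' @ us') @ ys" by auto
  from "2.IH"[OF e] l 2(3) u have "cs @ ts = c' @ us'" "xs = ys" by auto
  with l u show ?case by auto
qed

lemma fpre_inj: "inj (\<lambda>t. fpre [t])"
proof (rule injI)
  fix x y assume "fpre [x] = fpre [y]"
  then show "x = y" using fpre_inj_aux[of "[x]" "[]" "[y]" "[]"] by simp
qed

lemma fold_max_lt: "fold max xs (a::nat) < K \<longleftrightarrow> a < K \<and> (\<forall>x\<in>set xs. x < K)"
  by (induction xs arbitrary: a) auto

lemma fold_max_ge: "(a::nat) \<le> fold max xs a"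
  by (induction xs arbitrary: a) (auto, meson le_trans max.cobounded2)

lemma maxdeg_ge: "length ts \<le> maxdeg (Node ts)"
  by (simp add: fold_max_ge)

lemma fpre_maxdeg: "(\<forall>t\<in>set ts. maxdeg t < K) \<Longrightarrow> (\<forall>x\<in>set (fpre ts). x < K)"
  by (induction ts rule: fpre.induct) (auto simp: fold_max_lt)

lemma fpre_bound: "\<forall>x\<in>set (fpre ts). x < length (fpre ts)"
proof (induction ts rule: fpre.induct)
  case 1 then show ?case by simp
next
  case (2 cs ts)
  have "length (cs @ ts) \<le> length (fpre (cs @ ts))" using fpre_sum[of "cs @ ts"] by linarith
  with 2 show ?case by auto
qed

lemma finite_size: "finite {t. tsize t = n}"
proof -
  have "(\<lambda>t. fpre [t]) ` {t. tsize t = n} \<subseteq> {xs. set xs \<subseteq> {..<n} \<and> length xs = n}"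
    using fpre_bound[of "[_]"] by (auto simp: fpre_length)
  hence "finite ((\<lambda>t. fpre [t]) ` {t. tsize t = n})"
    by (rule finite_subset) (rule finite_lists_length_eq, simp)
  thus ?thesis using finite_imageD fpre_inj inj_on_subset by blast
qed

abbreviation LS :: "'a set \<Rightarrow> nat \<Rightarrow> 'a list set" where
  "LS A d \<equiv> {l. length l = d \<and> set l \<subseteq> A}"

lemma LS_Suc: "LS A (Suc d) = (\<lambda>(x,l). x # l) ` (A \<times> LS A d)"
  by (auto simp: length_Suc_conv image_iff)

lemma LS_finite: "finite A \<Longrightarrow> finite (LS A d)"
  using finite_lists_length_eq[of A d] by (simp add: conj_commute)

lemma inj_cons: "inj (\<lambda>(x,l). x # l)"
  by (rule injI) auto

lemma sum_times_split: "(\<Sum>p\<in>A \<times> B. F (fst p) (snd p)) = (\<Sum>i\<in>A. \<Sum>j\<in>B. F i j)"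
  by (simp add: sum.cartesian_product case_prod_beta)

lemma sum_LS_prod:
  fixes w :: "'a \<Rightarrow> real"
  assumes "finite A"
  shows "(\<Sum>l\<in>LS A d. prod_list (map w l)) = (sum w A)^d"
proof (induction d)
  case 0
  have "LS A 0 = {[]}" by auto
  then show ?case by simp
next
  case (Suc d)
  have "(\<Sum>l\<in>LS A (Suc d). prod_list (map w l)) = (\<Sum>p\<in>A \<times> LS A d. w (fst p) * prod_list (map w (snd p)))"
    unfolding LS_Suc by (subst sum.reindex) (auto intro: inj_on_subset[OF inj_cons] simp: case_prod_beta)
  also have "\<dots> = sum w A * (\<Sum>l\<in>LS A d. prod_list (map w l))"
    by (simp add: sum_times_split[of "\<lambda>x l. w x * prod_list (map w l)"] sum_product)
  finally show ?case using Suc by simp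
qed

lemma sum_LS_sumprod:
  fixes w g :: "'a \<Rightarrow> real"
  assumes "finite A"
  shows "(\<Sum>l\<in>LS A d. sum_list (map g l) * prod_list (map w l)) = real d * (sum w A)^(d-1) * (\<Sum>x\<in>A. g x * w x)"
proof (induction d)
  case 0
  have "LS A 0 = {[]}" by auto
  then show ?case by simp
next
  case (Suc d)
  have "(\<Sum>l\<in>LS A (Suc d). sum_list (map g l) * prod_list (map w l)) =
     (\<Sum>p\<in>A \<times> LS A d. (g (fst p) * w (fst p)) * prod_list (map w (snd p)) + w (fst p) * (sum_list (map g (snd p)) * prod_list (map w (snd p))))"
    unfolding LS_Suc by (subst sum.reindex) (auto intro!: sum.cong inj_on_subset[OF inj_cons] simp: case_prod_beta algebra_simps)
  also have "\<dots> = (\<Sum>x\<in>A. g x * w x) * (sum w A)^d + sum w A * (real d * (sum w A)^(d-1) * (\<Sum>x\<in>A. g x * w x))"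
    by (simp add: sum.distrib sum_times_split[of "\<lambda>x l. g x * w x * prod_list (map w l)"] 
       sum_times_split[of "\<lambda>x l. w x * (sum_list (map g l) * prod_list (map w l))"] sum_product[symmetric] sum_LS_prod[OF assms] Suc)
  also have "\<dots> = real (Suc d) * (sum w A)^(Suc d - 1) * (\<Sum>x\<in>A. g x * w x)"
    by (cases d) (auto simp: algebra_simps)
  finally show ?case .
qed


fun HT :: "nat \<Rightarrow> nat \<Rightarrow> ptree set" where
  "HT K 0 = {}"
| "HT K (Suc h) = Node ` {ts. length ts < K \<and> set ts \<subseteq> HT K h}"

lemma LSlt_eq: "{ts. length ts < K \<and> set ts \<subseteq> A} = (\<Union>d\<in>{..<K}. LS A d)"
  by auto

lemma LSlt_finite: "finite A \<Longrightarrow> finite {ts. length ts < K \<and> set ts \<subseteq> A}"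
  unfolding LSlt_eq by (auto intro: LS_finite)

lemma HT_finite: "finite (HT K h)"
  by (induction h) (auto intro: LSlt_finite)

lemma real_sum_tsize: "real (sum_list (map tsize ts)) = sum_list (map (\<lambda>t. real (tsize t)) ts)"
  by (induction ts) auto

lemma inj_Node: "inj Node" by (rule injI) auto

lemma sum_LSlt:
  fixes F :: "'a list \<Rightarrow> real"
  assumes "finite A"
  shows "(\<Sum>ts\<in>{ts. length ts < K \<and> set ts \<subseteq> A}. g (length ts) * F ts) = (\<Sum>d<K. g d * (\<Sum>ts\<in>LS A d. F ts))"
  unfolding LSlt_eq
  by (subst sum.UNION_disjoint) (auto simp: LS_finite assms sum_distrib_left intro!: sum.cong)

lemma gw_nn: "(\<And>d. 0 \<le> mu d) \<Longrightarrow> 0 \<le> gw_weight mu t"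
proof (induction t)
  case (Node ts)
  then show ?case by (auto intro!: mult_nonneg_nonneg prod_list_nonneg)
qed

locale stage =
  fixes mu :: "nat \<Rightarrow> real" and K :: nat and tau :: real
  assumes mu_nn: "\<And>d. 0 \<le> mu d"
  and K12: "12 \<le> K"
  and tau_pos: "0 < tau" and tau_le: "tau \<le> 1"
  and mean: "(\<Sum>d<K. real d * mu d) = 1 - tau"
  and mass_lo: "1 - tau / K \<le> (\<Sum>d<K. mu d)"
  and mass_hi: "(\<Sum>d<K. mu d) \<le> 1"
begin

abbreviation w where "w \<equiv> gw_weight mu"
definition Q where "Q h = sum w (HT K h)"
definition E where "E h = (\<Sum>t\<in>HT K h. real (tsize t) * w t)"
definition phi where "phi s = (\<Sum>d<K. mu d * s^d)"

lemma w_nn: "0 \<le> w t" using gw_nn mu_nn by blast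

lemma Q_Suc: "Q (Suc h) = phi (Q h)"
proof -
  have "Q (Suc h) = (\<Sum>ts\<in>{ts. length ts < K \<and> set ts \<subseteq> HT K h}. mu (length ts) * prod_list (map w ts))"
    unfolding Q_def by (simp add: sum.reindex inj_on_subset[OF inj_Node])
  also have "\<dots> = (\<Sum>d<K. mu d * (\<Sum>ts\<in>LS (HT K h) d. prod_list (map w ts)))"
    by (rule sum_LSlt[OF HT_finite])
  also have "\<dots> = phi (Q h)"
    unfolding phi_def Q_def by (simp add: sum_LS_prod[OF HT_finite])
  finally show ?thesis .
qed

lemma E_Suc: "E (Suc h) = (\<Sum>d<K. mu d * (Q h ^ d + real d * Q h ^ (d - 1) * E h))"
proof -
  have "E (Suc h) = (\<Sum>ts\<in>{ts. length ts < K \<and> set ts \<subseteq> HT K h}. mu (length ts) *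
         (prod_list (map w ts) + sum_list (map (\<lambda>t. real (tsize t)) ts) * prod_list (map w ts)))"
    unfolding E_def by (simp add: sum.reindex inj_on_subset[OF inj_Node] real_sum_tsize algebra_simps)
  also have "\<dots> = (\<Sum>d<K. mu d * (\<Sum>ts\<in>LS (HT K h) d. prod_list (map w ts) + sum_list (map (\<lambda>t. real (tsize t)) ts) * prod_list (map w ts)))"
    by (rule sum_LSlt[OF HT_finite])
  also have "\<dots> = (\<Sum>d<K. mu d * (Q h ^ d + real d * Q h ^ (d - 1) * E h))"
    unfolding Q_def E_def by (simp add: sum.distrib sum_LS_prod[OF HT_finite] sum_LS_sumprod[OF HT_finite])
  finally show ?thesis .
qed

lemma phi_mono: "0 \<le> s \<Longrightarrow> s \<le> t \<Longrightarrow> phi s \<le> phi t"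
  unfolding phi_def by (auto intro!: sum_mono mult_left_mono power_mono mu_nn)

lemma phi_le1: "0 \<le> s \<Longrightarrow> s \<le> 1 \<Longrightarrow> phi s \<le> 1"
proof -
  assume "0 \<le> s" "s \<le> 1"
  hence "phi s \<le> (\<Sum>d<K. mu d)" unfolding phi_def
    by (auto intro!: sum_mono mult_right_le_one_le mu_nn power_le_one)
  thus ?thesis using mass_hi by linarith
qed

lemma phi_nn: "0 \<le> s \<Longrightarrow> 0 \<le> phi s"
  unfolding phi_def by (auto intro!: sum_nonneg mu_nn mult_nonneg_nonneg)

lemma Q_bounds: "0 \<le> Q h \<and> Q h \<le> 1"
proof (induction h)
  case 0 then show ?case by (simp add: Q_def)
next
  case (Suc h) then show ?case by (simp add: Q_Suc phi_le1 phi_nn)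
qed

lemma pow_diff_le: "0 \<le> (s::real) \<Longrightarrow> s \<le> t \<Longrightarrow> t \<le> 1 \<Longrightarrow> t^d - s^d \<le> real d * (t - s)"
proof (induction d)
  case 0 then show ?case by simp
next
  case (Suc d)
  have "t ^ Suc d - s ^ Suc d = t * (t^d - s^d) + s^d * (t - s)" by (simp add: algebra_simps)
  also have "\<dots> \<le> 1 * (real d * (t - s)) + 1 * (t - s)"
    using Suc power_mono[of s t d] by (intro add_mono mult_mono) (auto simp: power_le_one)
  finally show ?case by (simp add: algebra_simps)
qed

lemma phi_lip: "0 \<le> s \<Longrightarrow> s \<le> t \<Longrightarrow> t \<le> 1 \<Longrightarrow> phi t - phi s \<le> (1 - tau) * (t - s)"
proof -
  assume a: "0 \<le> s" "s \<le> t" "t \<le> 1"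
  have "phi t - phi s = (\<Sum>d<K. mu d * (t^d - s^d))" unfolding phi_def by (simp add: sum_subtractf algebra_simps)
  also have "\<dots> \<le> (\<Sum>d<K. mu d * (real d * (t - s)))"
    using a by (intro sum_mono mult_left_mono pow_diff_le mu_nn) auto
  also have "\<dots> = (\<Sum>d<K. real d * mu d) * (t - s)" by (subst sum_distrib_right) (simp add: mult.commute mult.left_commute)
  finally show ?thesis using mean by simp
qed

lemma phi_star: "1 - 1 / real K \<le> phi (1 - 1 / real K)"
proof -
  have Kp: "real K \<ge> 12" using K12 by simp
  have "(\<Sum>d<K. mu d * (1 - real d / real K)) \<le> phi (1 - 1 / real K)"
    unfolding phi_def
  proof (intro sum_mono mult_left_mono mu_nn)
    fix d
    have "1 + real d * (- 1 / real K) \<le> (1 + (- 1 / real K))^d"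
      by (rule Bernoulli_inequality) (use Kp in simp)
    then show "1 - real d / real K \<le> (1 - 1 / real K) ^ d" by simp
  qed
  moreover have "(\<Sum>d<K. mu d * (1 - real d / real K)) = (\<Sum>d<K. mu d) - (1 - tau) / real K"
    using mean by (simp add: algebra_simps sum_subtractf sum_divide_distrib[symmetric])
  moreover have "1 - tau / K - (1 - tau) / real K = 1 - 1 / real K"
    using K12 by (simp add: field_simps)
  ultimately show ?thesis using mass_lo by linarith
qed

lemma Q_conv: "1 - 1 / real K - Q h \<le> (1 - tau)^h"
proof (induction h)
  case 0 then show ?case by (simp add: Q_def)
next
  case (Suc h)
  let ?x = "1 - 1 / real K"
  have Kp: "real K \<ge> 12" using K12 by simp
  have x01: "0 \<le> ?x" "?x \<le> 1" using Kp by auto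
  show ?case
  proof (cases "?x \<le> Q h")
    case True
    hence "phi ?x \<le> phi (Q h)" using phi_mono x01 by auto
    with phi_star have "?x \<le> Q (Suc h)" by (simp add: Q_Suc)
    moreover have "0 \<le> (1 - tau)^Suc h" using tau_le by simp
  ultimately show ?thesis by linarith
  next
    case False
    have "phi ?x - phi (Q h) \<le> (1 - tau) * (?x - Q h)"
      using phi_lip[of "Q h" ?x] False Q_bounds x01 by auto
    also have "\<dots> \<le> (1 - tau) * (1 - tau)^h" using Suc tau_le by (intro mult_left_mono) auto
    finally show ?thesis using phi_star by (simp add: Q_Suc)
  qed
qed

lemma E_bound: "0 \<le> E h \<and> E h \<le> 1 / tau"
proof (induction h)
  case 0 then show ?case using tau_pos by (simp add: E_def)
next
  case (Suc h)
  have Q: "0 \<le> Q h" "Q h \<le> 1" using Q_bounds by auto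
  have "E (Suc h) \<le> (\<Sum>d<K. mu d * (1 + real d * 1 * E h))"
    unfolding E_Suc using Q Suc
    by (intro sum_mono mult_left_mono add_mono mult_right_mono mult_left_mono power_le_one mu_nn) auto
  also have "\<dots> = (\<Sum>d<K. mu d + (real d * mu d) * E h)"
    by (intro sum.cong) (auto simp: algebra_simps)
  also have "\<dots> = (\<Sum>d<K. mu d) + (\<Sum>d<K. real d * mu d) * E h"
    by (simp add: sum.distrib sum_distrib_right)
  also have "\<dots> \<le> 1 + (1 - tau) * (1 / tau)"
    using mass_hi mean Suc tau_le less_imp_le[OF tau_pos] mult_left_mono[of "E h" "1/tau" "1 - tau"] by auto
  also have "\<dots> = 1 / tau" using tau_pos by (simp add: field_simps)
  finally have "E (Suc h) \<le> 1 / tau" .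
  moreover have "0 \<le> E (Suc h)" unfolding E_def
    by (auto intro!: sum_nonneg mult_nonneg_nonneg w_nn)
  ultimately show ?case by simp
qed

lemma exists_Q: "\<exists>h. 1 - 2 / real K \<le> Q h"
proof -
  have "(\<lambda>h. (1 - tau)^h) \<longlonglongrightarrow> 0" using tau_pos tau_le by (intro LIMSEQ_power_zero) auto
  moreover have "0 < 1 / real K" using K12 by simp
  ultimately obtain h where "(1 - tau)^h < 1 / real K"
    by (metis (no_types, lifting) LIMSEQ_unique less_le_not_le linorder_not_le order_tendstoD(2) eventually_sequentially le_refl)
  then show ?thesis using Q_conv[of h] by (intro exI[of _ h]) auto
qed

end

lemma geo_bound:
  fixes x :: real
  assumes "0 \<le> x" "x < 1"
  shows "(\<Sum>i=m..n. x^i) \<le> x^m / (1 - x)"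
proof -
  have "x^m - x^Suc n \<le> x^m" using assms by simp
  then show ?thesis using assms by (auto simp: sum_gp divide_right_mono)
qed


lemma pigeon:
  fixes A B :: "nat \<Rightarrow> real"
  assumes "finite R" "\<And>n. 0 \<le> A n" "0 < sum A R" "sum B R \<le> eps * sum A R" "0 < eps"
    and Bnn: "\<And>n. 0 \<le> B n"
  shows "\<exists>n\<in>R. 0 < A n \<and> B n \<le> eps * A n"
proof (rule ccontr)
  assume nt: "\<not> ?thesis"
  have h: "eps * A n \<le> B n" if "n \<in> R" for n
  proof (cases "A n = 0")
    case True
    then show ?thesis using Bnn[of n] by simp
  next
    case False
    then show ?thesis using nt that assms(2)[of n] by force
  qed
  obtain n0 where n0: "n0 \<in> R" "A n0 \<noteq> 0"
    using assms(3) by (metis sum.neutral less_irrefl)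
  have "eps * A n0 < B n0" using nt n0 assms(2)[of n0] by force
  hence "(\<Sum>n\<in>R. eps * A n) < sum B R"
    using sum_strict_mono_ex1[OF assms(1), of "\<lambda>n. eps * A n" B] h n0 by blast
  thus False using assms(4) by (simp add: sum_distrib_left)
qed

lemma prod_nu: "prod_list (map (\<lambda>d. mu d * exp (th * (real d - 1))) l) =
   prod_list (map mu l) * exp (th * (real (sum_list l) - real (length l)))"
proof (induction l)
  case Nil then show ?case by simp
next
  case (Cons a l)
  have ar: "th * (real a - 1) + th * (real (sum_list l) - real (length l)) =
        th * (real (sum_list (a # l)) - real (length (a # l)))"
    by (simp add: algebra_simps)
  have e: "exp (th * (real a - 1)) * exp (th * (real (sum_list l) - real (length l))) =
        exp (th * (real (sum_list (a # l)) - real (length (a # l))))"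
    unfolding exp_add[symmetric] ar ..
  have "prod_list (map (\<lambda>d. mu d * exp (th * (real d - 1))) (a # l)) =
     (mu a * exp (th * (real a - 1))) * (prod_list (map mu l) * exp (th * (real (sum_list l) - real (length l))))"
    using Cons by simp
  also have "\<dots> = (mu a * prod_list (map mu l)) * (exp (th * (real a - 1)) * exp (th * (real (sum_list l) - real (length l))))"
    by (simp only: ac_simps)
  finally show ?case unfolding e by simp
qed

lemma w_nu:
  "gw_weight mu t = exp th * prod_list (map (\<lambda>d. mu d * exp (th * (real d - 1))) (fpre [t]))"
proof -
  have "sum_list (fpre [t]) + 1 = length (fpre [t])" using fpre_sum[of "[t]"] by simp
  hence "real (sum_list (fpre [t])) + 1 = real (length (fpre [t]))"
    by (metis of_nat_1 of_nat_add)
  hence r: "real (sum_list (fpre [t])) - real (length (fpre [t])) = -1" by linarith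
  have "prod_list (map (\<lambda>d. mu d * exp (th * (real d - 1))) (fpre [t])) = gw_weight mu t * exp (- th)"
    unfolding prod_nu r using fpre_prod[of mu "[t]"] by simp
  thus ?thesis by (simp add: exp_minus)
qed

context stage begin

lemma good_mass:
  fixes T :: nat
  assumes T: "2 * real K / tau \<le> real T"
  shows "\<exists>h. exp(-4)/3 \<le> (\<Sum>ts\<in>{ts. length ts = K \<and> set ts \<subseteq> HT K h \<and> sum_list (map tsize ts) \<le> T}. prod_list (map w ts))"
proof -
  obtain h where Qh: "1 - 2 / real K \<le> Q h" using exists_Q by blast
  define q where "q = Q h"
  have Kp: "real K \<ge> 12" using K12 by simp
  have "0 < 2 * real K / tau" using tau_pos Kp by simp
  hence Tp: "real T > 0" using T by linarith
  have "2 / real K \<le> 1/6" using Kp by (simp add: field_simps)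
  hence q1: "q \<le> 1" "3/4 \<le> q" using Q_bounds[of h] Qh unfolding q_def by auto
  let ?L = "LS (HT K h) K"
  let ?P = "{ts. sum_list (map tsize ts) \<le> T}"
  let ?p = "\<lambda>ts. prod_list (map w ts)"
  let ?s = "\<lambda>ts. sum_list (map (\<lambda>t. real (tsize t)) ts)"
  have finL: "finite ?L" by (rule LS_finite[OF HT_finite])
  have pnn: "\<And>ts. 0 \<le> ?p ts" by (auto intro!: prod_list_nonneg w_nn)
  have sL: "sum ?p ?L = q^K" unfolding q_def Q_def by (rule sum_LS_prod[OF HT_finite])
  have split: "sum ?p ?L = sum ?p (?L \<inter> ?P) + sum ?p (?L - ?P)" by (rule sum.Int_Diff[OF finL])
  have "sum ?p (?L - ?P) \<le> (\<Sum>ts\<in>?L - ?P. ?s ts / real T * ?p ts)"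
  proof (intro sum_mono)
    fix ts assume "ts \<in> ?L - ?P"
    hence "real T \<le> ?s ts" by (auto simp: real_sum_tsize[symmetric])
    hence "1 \<le> ?s ts / real T" using Tp by simp
    thus "?p ts \<le> ?s ts / real T * ?p ts" using pnn[of ts] mult_right_mono[of 1 "?s ts / real T" "?p ts"] by simp
  qed
  also have "\<dots> \<le> (\<Sum>ts\<in>?L. ?s ts / real T * ?p ts)"
    by (rule sum_mono2[OF finL]) (auto intro!: mult_nonneg_nonneg pnn divide_nonneg_nonneg sum_list_nonneg)
  also have "\<dots> = (\<Sum>ts\<in>?L. ?s ts * ?p ts) / real T" by (simp add: sum_divide_distrib)
  also have "(\<Sum>ts\<in>?L. ?s ts * ?p ts) = real K * q^(K-1) * E h"
    unfolding q_def Q_def E_def by (rule sum_LS_sumprod[OF HT_finite])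
  also have "real K * q^(K-1) * E h / real T \<le> real K * q^(K-1) * (1/tau) / (2 * real K / tau)"
    using E_bound[of h] q1 T Tp tau_pos Kp
    by (intro frac_le mult_left_mono mult_nonneg_nonneg) (auto intro!: divide_pos_pos)
  also have "\<dots> = q^(K-1) / 2" using tau_pos Kp by (simp add: field_simps)
  finally have b2: "sum ?p (?L - ?P) \<le> q^(K-1) / 2" .
  have qK: "q^K = q * q^(K-1)" using K12 by (metis Suc_pred' not_numeral_le_zero not_gr_zero power_Suc)
  have "q^(K-1) * (q - 1/2) \<ge> q^(K-1) * (q / 3)" using q1 by (intro mult_left_mono) auto
  hence "q * q^(K-1) - q^(K-1) / 2 \<ge> (q * q^(K-1)) / 3" by (simp add: algebra_simps)
  hence m1: "q^K / 3 \<le> sum ?p (?L \<inter> ?P)" using split sL b2 unfolding qK by linarith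
  have "exp (-4) \<le> (1 - 2 / real K)^K"
  proof -
    let ?x = "2 / real K"
    have x: "0 \<le> ?x" "?x \<le> 1/2" using Kp by auto
    have "- ?x - 2 * ?x^2 \<le> ln (1 - ?x)" by (rule ln_one_minus_pos_lower_bound[OF x])
    moreover have "2 * ?x^2 \<le> ?x" using Kp by (simp add: power2_eq_square field_simps)
    ultimately have "-2 * ?x \<le> ln (1 - ?x)" by linarith
    hence "real K * (-2 * ?x) \<le> real K * ln (1 - ?x)" by (intro mult_left_mono) auto
    hence "-4 \<le> real K * ln (1 - ?x)" using Kp by simp
    hence "exp (-4) \<le> exp (real K * ln (1 - ?x))" by simp
    also have "\<dots> = (1 - ?x)^K" using x by (subst exp_of_nat_mult) simp
    finally show ?thesis .
  qed
  also have "\<dots> \<le> q^K" using Qh Kp unfolding q_def by (intro power_mono) auto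
  finally have "exp (-4) / 3 \<le> sum ?p (?L \<inter> ?P)" using m1 by simp
  moreover have "?L \<inter> ?P = {ts. length ts = K \<and> set ts \<subseteq> HT K h \<and> sum_list (map tsize ts) \<le> T}" by auto
  ultimately show ?thesis by auto
qed

end


context stage begin

lemma stage_final:
  fixes T :: nat and f :: "nat \<Rightarrow> real" and th eps :: real
  assumes T: "2 * real K / tau \<le> real T"
  and fK: "\<And>n. K \<le> n \<Longrightarrow> n \<le> 1 + T \<Longrightarrow> real n / f n < real K"
  and psi1: "(\<Sum>d<K. mu d * exp (th * (real d - 1))) < 1"
  and psi2: "exp th * (\<Sum>d<K. mu d * exp (th * (real d - 1)))^K / (1 - (\<Sum>d<K. mu d * exp (th * (real d - 1)))) \<le> eps * (exp (-4) / 3 * mu K)"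
  and eps: "0 < eps" and muK: "0 < mu K"
  shows "\<exists>n\<ge>K. size_prob mu n > 0 \<and> cond_prob mu n (\<lambda>t. real (maxdeg t) > real n / f n) > 1 - eps"
proof -
  define nu where "nu = (\<lambda>d. mu d * exp (th * (real d - 1)))"
  define psi where "psi = (\<Sum>d<K. nu d)"
  have psi_nn: "0 \<le> psi" unfolding psi_def nu_def by (auto intro!: sum_nonneg mult_nonneg_nonneg mu_nn)
  have psi1': "psi < 1" using psi1 unfolding psi_def nu_def .
  have psi2': "exp th * psi^K / (1 - psi) \<le> eps * (exp (-4) / 3 * mu K)" using psi2 unfolding psi_def nu_def .
  define Aset where "Aset n = {t. tsize t = n \<and> real (maxdeg t) > real n / f n}" for n
  define Bset where "Bset n = {t. tsize t = n \<and> \<not> real (maxdeg t) > real n / f n}" for n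
  define A where "A n = sum w (Aset n)" for n
  define B where "B n = sum w (Bset n)" for n
  define R where "R = {K..1+T}"
  have finA: "finite (Aset n)" for n unfolding Aset_def by (rule finite_subset[OF _ finite_size[of n]]) auto
  have finB: "finite (Bset n)" for n unfolding Bset_def by (rule finite_subset[OF _ finite_size[of n]]) auto
  have Ann: "0 \<le> A n" for n unfolding A_def by (auto intro!: sum_nonneg w_nn)
  have Bnn: "0 \<le> B n" for n unfolding B_def by (auto intro!: sum_nonneg w_nn)
  obtain h where gm: "exp(-4)/3 \<le> (\<Sum>ts\<in>{ts. length ts = K \<and> set ts \<subseteq> HT K h \<and> sum_list (map tsize ts) \<le> T}. prod_list (map w ts))"
    using good_mass[OF T] by blast
  define Gs where "Gs = {ts. length ts = K \<and> set ts \<subseteq> HT K h \<and> sum_list (map tsize ts) \<le> T}"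
  have finGs: "finite Gs" unfolding Gs_def
    by (rule finite_subset[OF _ LS_finite[OF HT_finite[of K h], of K]]) auto
  have sG: "sum w (Node ` Gs) = mu K * (\<Sum>ts\<in>Gs. prod_list (map w ts))"
    by (subst sum.reindex) (auto simp: inj_on_subset[OF inj_Node] Gs_def sum_distrib_left intro!: sum.cong)
  have GsubA: "Node ` Gs \<subseteq> (\<Union>n\<in>R. Aset n)"
  proof
    fix t assume "t \<in> Node ` Gs"
    then obtain ts where t: "t = Node ts" "ts \<in> Gs" by auto
    let ?n = "tsize t"
    have n1: "K \<le> ?n" "?n \<le> 1 + T" using t sum_tsize_ge[of ts] unfolding Gs_def by auto
    have "real ?n / f ?n < real K" by (rule fK[OF n1])
    moreover have "K \<le> maxdeg t" using t maxdeg_ge[of ts] unfolding Gs_def by auto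
    ultimately have "real (maxdeg t) > real ?n / f ?n" by linarith
    thus "t \<in> (\<Union>n\<in>R. Aset n)" using n1 unfolding R_def Aset_def by auto
  qed
  have sumA: "sum A R = sum w (\<Union>n\<in>R. Aset n)"
    unfolding A_def R_def using finA by (subst sum.UNION_disjoint) (auto simp: Aset_def)
  have "sum w (Node ` Gs) \<le> sum w (\<Union>n\<in>R. Aset n)"
    by (rule sum_mono2[OF _ GsubA]) (auto simp: R_def finA w_nn)
  moreover have "mu K * (exp(-4)/3) \<le> mu K * (\<Sum>ts\<in>Gs. prod_list (map w ts))"
    using gm muK unfolding Gs_def by (intro mult_left_mono) auto
  ultimately have sumA_lo: "mu K * (exp(-4)/3) \<le> sum A R"
    using sG sumA by linarith
  have wn: "w t = exp th * prod_list (map nu (fpre [t]))" for t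
    unfolding nu_def by (rule w_nu)
  have Bb: "B n \<le> exp th * psi^n" if "n \<in> R" for n
  proof -
    have nR: "K \<le> n" "n \<le> 1 + T" using that unfolding R_def by auto
    have "B n = (\<Sum>t\<in>Bset n. exp th * prod_list (map nu (fpre [t])))"
      unfolding B_def using wn by simp
    also have "\<dots> = exp th * (\<Sum>l\<in>(\<lambda>t. fpre [t]) ` Bset n. prod_list (map nu l))"
    proof -
      have "(\<Sum>l\<in>(\<lambda>t. fpre [t]) ` Bset n. prod_list (map nu l)) = (\<Sum>t\<in>Bset n. prod_list (map nu (fpre [t])))"
        using sum.reindex[OF inj_on_subset[OF fpre_inj subset_UNIV], of "\<lambda>l. prod_list (map nu l)" "Bset n"]
        by (simp only: o_def)
      thus ?thesis by (simp add: sum_distrib_left)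
    qed
    also have "\<dots> \<le> exp th * (\<Sum>l\<in>LS {..<K} n. prod_list (map nu l))"
    proof -
      have fin: "finite (LS {..<K} n)" by (rule LS_finite) simp
      have sub: "(\<lambda>t. fpre [t]) ` Bset n \<subseteq> LS {..<K} n"
      proof
        fix l assume "l \<in> (\<lambda>t. fpre [t]) ` Bset n"
        then obtain t where t: "l = fpre [t]" "t \<in> Bset n" by auto
        have tb: "tsize t = n" "\<not> real n / f n < real (maxdeg t)" using t(2) unfolding Bset_def by auto
        have "real (maxdeg t) < real K" using tb(2) fK[OF nR] by linarith
        hence mk: "maxdeg t < K" by (simp only: of_nat_less_iff)
        have "\<forall>x\<in>set (fpre [t]). x < K" by (rule fpre_maxdeg) (use mk in simp)
        moreover have "length (fpre [t]) = n" using fpre_length[of "[t]"] tb(1) by simp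
        ultimately show "l \<in> LS {..<K} n" using t(1) by auto
      qed
      have nn: "0 \<le> prod_list (map nu l)" for l
        unfolding nu_def by (auto intro!: prod_list_nonneg mult_nonneg_nonneg mu_nn)
      have "(\<Sum>l\<in>(\<lambda>t. fpre [t]) ` Bset n. prod_list (map nu l)) \<le> (\<Sum>l\<in>LS {..<K} n. prod_list (map nu l))"
        using sum_mono2[OF fin sub, of "\<lambda>l. prod_list (map nu l)"] nn by blast
      thus ?thesis by (rule mult_left_mono) simp
    qed
    also have "\<dots> = exp th * psi^n" unfolding psi_def by (simp add: sum_LS_prod)
    finally show ?thesis .
  qed
  have "sum B R \<le> (\<Sum>n\<in>R. exp th * psi^n)" by (rule sum_mono) (rule Bb)
  also have "\<dots> = exp th * (\<Sum>n=K..1+T. psi^n)" unfolding R_def by (rule sum_distrib_left[symmetric])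
  also have "\<dots> \<le> exp th * (psi^K / (1 - psi))"
    by (intro mult_left_mono geo_bound psi_nn psi1') simp
  also have "\<dots> \<le> eps * sum A R"
  proof -
    have "eps * (exp (-4) / 3 * mu K) \<le> eps * sum A R"
      using sumA_lo eps by (intro mult_left_mono) (auto simp: mult.commute)
    moreover have "exp th * (psi ^ K / (1 - psi)) = exp th * psi ^ K / (1 - psi)" by simp
    ultimately show ?thesis using psi2' by linarith
  qed
  finally have sumB: "sum B R \<le> eps * sum A R" .
  have "0 < mu K * (exp(-4)/3)" using muK by simp
  hence "0 < sum A R" using sumA_lo by linarith
  have finR: "finite R" by (simp add: R_def)
  obtain n where n: "n \<in> R" "0 < A n" "B n \<le> eps * A n"
    using pigeon[OF finR Ann \<open>0 < sum A R\<close> sumB eps Bnn] by blast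
  have disj: "Aset n \<inter> Bset n = {}" by (auto simp: Aset_def Bset_def)
  have un: "{t. tsize t = n} = Aset n \<union> Bset n" by (auto simp: Aset_def Bset_def)
  have sp: "size_prob mu n = A n + B n"
    unfolding size_prob_def un A_def B_def by (rule sum.union_disjoint[OF finA finB disj])
  have seta: "{t. tsize t = n \<and> real (maxdeg t) > real n / f n} = Aset n" by (simp add: Aset_def)
  have cp: "cond_prob mu n (\<lambda>t. real (maxdeg t) > real n / f n) = A n / (A n + B n)"
    unfolding cond_prob_def sp seta A_def ..
  have An: "0 < A n" using n by simp
  have den: "A n + B n \<le> (1 + eps) * A n" using n by (simp add: algebra_simps)
  have "A n / ((1 + eps) * A n) \<le> A n / (A n + B n)"
    by (rule divide_left_mono[OF den]) (use An Bnn[of n] eps in \<open>auto intro: add_pos_nonneg\<close>)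
  moreover have "A n / ((1 + eps) * A n) = 1 / (1 + eps)" using An eps by simp
  moreover have "1 - eps < 1 / (1 + eps)"
  proof -
    have "(1 - eps) * (1 + eps) < 1" using eps by (simp add: algebra_simps)
    thus ?thesis using eps by (simp add: field_simps)
  qed
  ultimately have "1 - eps < cond_prob mu n (\<lambda>t. real (maxdeg t) > real n / f n)" unfolding cp by linarith
  moreover have "0 < size_prob mu n" using sp An Bnn[of n] by simp
  moreover have "K \<le> n" using n unfolding R_def by simp
  ultimately show ?thesis by blast
qed

end


definition aw :: "(nat \<Rightarrow> nat) \<Rightarrow> nat \<Rightarrow> real" where
  "aw k i = (1/2)^i / real (k i)"

definition Psi :: "(nat \<Rightarrow> nat) \<Rightarrow> nat \<Rightarrow> real \<Rightarrow> real" where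
  "Psi kk j th = (1 - (\<Sum>i\<in>{1..<j}. aw kk i)) * exp (- th) + (\<Sum>i\<in>{1..<j}. aw kk i * exp (th * (real (kk i) - 1)))"

definition kcond :: "(nat \<Rightarrow> real) \<Rightarrow> nat \<Rightarrow> (nat \<Rightarrow> nat) \<Rightarrow> nat \<Rightarrow> bool" where
  "kcond f j kk K \<longleftrightarrow> kk (j - 1) < K \<and> 12 \<le> K \<and> (\<forall>n\<ge>K. 2 + 2^j < f n) \<and>
    (\<exists>th>0. Psi kk j th < 1 \<and> exp th * Psi kk j th ^ K / (1 - Psi kk j th) \<le> 1 / (real j + 1) * (exp (-4) / 3 * ((1/2)^j / real K)))"

lemma geo1: "(\<Sum>i\<in>{1..<Suc j}. (1/2::real)^i) = 1 - (1/2)^j"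
proof (induction j)
  case 0 then show ?case by simp
next
  case (Suc j)
  have "{1..<Suc (Suc j)} = insert (Suc j) {1..<Suc j}" by auto
  then show ?case using Suc by simp
qed

lemma Psi_cong: "(\<And>i. i < j \<Longrightarrow> kk i = kk' i) \<Longrightarrow> Psi kk j th = Psi kk' j th"
  unfolding Psi_def aw_def by (intro arg_cong2[where f="(+)"] arg_cong2[where f="(*)"] sum.cong refl) auto

lemma kcond_cong: "0 < j \<Longrightarrow> (\<And>i. i < j \<Longrightarrow> kk i = kk' i) \<Longrightarrow> kcond f j kk K = kcond f j kk' K"
  unfolding kcond_def using Psi_cong[of j kk kk'] by simp

lemma exists_kcond:
  fixes f :: "nat \<Rightarrow> real"
  assumes flim: "filterlim f at_top sequentially" and j: "1 \<le> j" and kk: "\<And>i. 1 \<le> i \<Longrightarrow> i < j \<Longrightarrow> 1 \<le> kk i"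
  shows "\<exists>K. kcond f j kk K"
proof -
  define S where "S = (\<Sum>i\<in>{1..<j}. aw kk i)"
  have awk: "aw kk i * real (kk i) = (1/2)^i" if "1 \<le> i" "i < j" for i
    using kk[OF that] unfolding aw_def by simp
  have aw_le: "aw kk i \<le> (1/2)^i" if "1 \<le> i" "i < j" for i
    using kk[OF that] unfolding aw_def by (simp add: divide_le_eq_1 field_simps)
  have aw_nn: "0 \<le> aw kk i" for i unfolding aw_def by simp
  obtain j' where j': "j = Suc j'" using j by (cases j) auto
  have g1: "(\<Sum>i\<in>{1..<j}. (1/2::real)^i) = 1 - (1/2)^j'" unfolding j' by (rule geo1)
  have "S \<le> (\<Sum>i\<in>{1..<j}. (1/2::real)^i)" unfolding S_def by (rule sum_mono) (use aw_le in auto)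
  moreover have "(0::real) \<le> (1/2)^j'" by simp
  ultimately have S1: "S \<le> 1" using g1 by linarith
  define g where "g th = Psi kk j th" for th
  have g_eq: "g th = (1 - S) * exp (- th) + (\<Sum>i\<in>{1..<j}. aw kk i * exp (th * (real (kk i) - 1)))" for th
    unfolding g_def Psi_def S_def ..
  define D where "D = - (1 - S) + (\<Sum>i\<in>{1..<j}. aw kk i * (real (kk i) - 1))"
  have dg: "(g has_real_derivative D) (at 0)"
    unfolding g_eq[abs_def] D_def by (auto intro!: derivative_eq_intros simp: algebra_simps)
  have "(\<Sum>i\<in>{1..<j}. aw kk i * (real (kk i) - 1)) = (\<Sum>i\<in>{1..<j}. (1/2::real)^i) - S"
    unfolding S_def by (simp add: right_diff_distrib sum_subtractf awk)
  hence "D = - ((1/2::real)^j')" unfolding D_def using g1 by simp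
  hence Dneg: "D < 0" by simp
  have g0: "g 0 = 1" unfolding g_eq S_def by simp
  obtain d where d: "d > 0" "\<And>h. h > 0 \<Longrightarrow> h < d \<Longrightarrow> g 0 > g (0 + h)"
    using DERIV_neg_dec_right[OF dg Dneg] by blast
  define th where "th = d / 2"
  have th: "0 < th" "g th < 1" using d(1) d(2)[of th] g0 unfolding th_def by auto
  define rho where "rho = g th"
  have rho_nn: "0 \<le> rho" unfolding rho_def g_eq using S1 by (auto intro!: add_nonneg_nonneg sum_nonneg mult_nonneg_nonneg aw_nn)
  have rho1: "rho < 1" using th unfolding rho_def by simp
  define c where "c = 1 / (real j + 1) * (exp (-4) / 3 * (1/2)^j)"
  have cpos: "0 < c" unfolding c_def by simp
  define c' where "c' = c * (1 - rho) / exp th"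
  have c'pos: "0 < c'" unfolding c'_def using cpos rho1 by simp
  have "(\<lambda>n. of_nat n * rho ^ n) \<longlonglongrightarrow> 0" by (rule powser_times_n_limit_0) (use rho_nn rho1 in simp)
  hence ev1: "eventually (\<lambda>n. real n * rho ^ n < c') sequentially"
    using c'pos by (auto dest: order_tendstoD(2))
  have ev2: "eventually (\<lambda>n. 3 + 2^j \<le> f n) sequentially"
    using flim unfolding filterlim_at_top by blast
  obtain N1 where N1: "\<And>n. n \<ge> N1 \<Longrightarrow> real n * rho ^ n < c'" using ev1 unfolding eventually_sequentially by blast
  obtain N2 where N2: "\<And>n. n \<ge> N2 \<Longrightarrow> 3 + 2^j \<le> f n" using ev2 unfolding eventually_sequentially by blast
  define K where "K = max (max (Suc (kk (j - 1))) 12) (max N1 N2)"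
  have K: "kk (j - 1) < K" "12 \<le> K" "N1 \<le> K" "N2 \<le> K" unfolding K_def by auto
  have fK: "\<forall>n\<ge>K. 2 + 2^j < f n"
  proof (intro allI impI)
    fix n assume "K \<le> n"
    hence "3 + 2^j \<le> f n" using N2 K(4) by simp
    thus "2 + 2^j < f n" by simp
  qed
  have Kpos: "0 < real K" using K by simp
  have "real K * rho ^ K < c'" using N1 K(3) by blast
  hence "rho ^ K < c' / real K" using Kpos by (simp add: field_simps)
  hence "exp th * rho ^ K \<le> exp th * (c' / real K)" by (intro mult_left_mono) auto
  also have "\<dots> = c * (1 - rho) / real K" unfolding c'_def by simp
  finally have "exp th * rho ^ K / (1 - rho) \<le> c * (1 - rho) / real K / (1 - rho)"
    using rho1 by (intro divide_right_mono) auto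
  also have "\<dots> = c / real K" using rho1 by simp
  finally have "exp th * rho ^ K / (1 - rho) \<le> c / real K" .
  hence "exp th * rho ^ K / (1 - rho) \<le> 1 / (real j + 1) * (exp (-4) / 3 * ((1/2)^j / real K))"
  proof -
    have "c / real K = 1 / (real j + 1) * (exp (-4) / 3 * ((1/2)^j / real K))" unfolding c_def by simp
    thus ?thesis using \<open>exp th * rho ^ K / (1 - rho) \<le> c / real K\<close> by simp
  qed
  hence "kcond f j kk K" unfolding kcond_def using K fK th by (auto simp: rho_def g_def)
  thus ?thesis by blast
qed

primrec ks :: "(nat \<Rightarrow> real) \<Rightarrow> nat \<Rightarrow> nat list" where
  "ks f 0 = [0]"
| "ks f (Suc j) = ks f j @ [SOME K. kcond f (Suc j) (\<lambda>i. ks f j ! i) K]"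

definition kseq :: "(nat \<Rightarrow> real) \<Rightarrow> nat \<Rightarrow> nat" where
  "kseq f i = ks f i ! i"

lemma ks_length: "length (ks f j) = Suc j"
  by (induction j) auto

lemma ks_nth: "i \<le> j \<Longrightarrow> ks f j ! i = kseq f i"
proof (induction j)
  case 0 then show ?case by (simp add: kseq_def)
next
  case (Suc j)
  show ?case
  proof (cases "i \<le> j")
    case True
    then show ?thesis using Suc ks_length[of f j] by (simp add: nth_append)
  next
    case False
    then have "i = Suc j" using Suc by simp
    then show ?thesis by (simp add: kseq_def)
  qed
qed

lemma kseq_Suc: "kseq f (Suc j) = (SOME K. kcond f (Suc j) (kseq f) K)"
proof -
  have "kseq f (Suc j) = (SOME K. kcond f (Suc j) (\<lambda>i. ks f j ! i) K)"
    unfolding kseq_def using ks_length[of f j] by (simp add: nth_append)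
  also have "(\<lambda>K. kcond f (Suc j) (\<lambda>i. ks f j ! i) K) = (\<lambda>K. kcond f (Suc j) (kseq f) K)"
    by (rule ext, rule kcond_cong) (auto simp: ks_nth)
  finally show ?thesis by simp
qed

lemma kseq0: "kseq f 0 = 0" by (simp add: kseq_def)

lemma kseq_cond:
  assumes "filterlim f at_top sequentially"
  shows "kcond f (Suc j) (kseq f) (kseq f (Suc j))"
proof (induction j rule: less_induct)
  case (less j)
  have "\<exists>K. kcond f (Suc j) (kseq f) K"
  proof (rule exists_kcond[OF assms])
    fix i assume i: "1 \<le> i" "i < Suc j"
    then obtain i' where i': "i = Suc i'" "i' < j" by (cases i) auto
    have "kseq f i' < kseq f i" using less[OF i'(2)] unfolding kcond_def i'(1) by simp
    thus "1 \<le> kseq f i" by simp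
  qed simp
  then show ?case unfolding kseq_Suc by (rule someI_ex)
qed


definition bw :: "(nat \<Rightarrow> nat) \<Rightarrow> nat \<Rightarrow> real" where
  "bw k i = (if i = 0 then 1 - (\<Sum>n. aw k (Suc n)) else aw k i)"

definition mu_of :: "(nat \<Rightarrow> nat) \<Rightarrow> nat \<Rightarrow> real" where
  "mu_of k d = (if d \<in> range k then bw k (inv k d) else 0)"

lemma shift1: "(\<Sum>i\<in>{1..<Suc n}. g i) = (\<Sum>i<n. g (Suc i) :: real)"
proof (induction n)
  case 0 then show ?case by simp
next
  case (Suc n)
  have "{1..<Suc (Suc n)} = insert (Suc n) {1..<Suc n}" by auto
  then show ?case using Suc by simp
qed

lemma sum_below:
  fixes k :: "nat \<Rightarrow> nat" and h :: "nat \<Rightarrow> real"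
  assumes sm: "strict_mono k" and z: "\<And>d. d \<notin> range k \<Longrightarrow> h d = 0"
  shows "(\<Sum>d<k j. h d) = (\<Sum>i<j. h (k i) :: real)"
proof -
  have inj: "inj k" by (rule strict_mono_imp_inj_on[OF sm])
  have "sum h (k ` {..<j}) = (\<Sum>i<j. h (k i))"
    using sum.reindex[OF inj_on_subset[OF inj subset_UNIV], of h "{..<j}"] by (simp add: o_def)
  hence "(\<Sum>i<j. h (k i)) = sum h (k ` {..<j})" by simp
  also have "\<dots> = (\<Sum>d<k j. h d)"
  proof (rule sum.mono_neutral_left)
    show "k ` {..<j} \<subseteq> {..<k j}"
    proof
      fix x assume "x \<in> k ` {..<j}"
      then obtain i where "i < j" "x = k i" by auto
      thus "x \<in> {..<k j}" using strict_monoD[OF sm] by blast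
    qed
    show "\<forall>d\<in>{..<k j} - k ` {..<j}. h d = 0"
    proof
      fix d assume d: "d \<in> {..<k j} - k ` {..<j}"
      show "h d = 0"
      proof (cases "d \<in> range k")
        case True
        then obtain i where di: "d = k i" by auto
        have "\<not> i < j" using d di by blast
        hence "k j \<le> k i" using strict_mono_less_eq[OF sm] by simp
        moreover have "k i < k j" using d di by simp
        ultimately show ?thesis by simp
      next
        case False then show ?thesis by (rule z)
      qed
    qed
  qed simp
  finally show ?thesis by simp
qed

locale kseq_ctx =
  fixes k :: "nat \<Rightarrow> nat"
  assumes sm: "strict_mono k" and k0: "k 0 = 0" and k1: "\<And>i. 1 \<le> i \<Longrightarrow> 1 \<le> k i"
begin

abbreviation mu where "mu \<equiv> mu_of k"

lemma inj_k: "inj k" by (rule strict_mono_imp_inj_on[OF sm])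

lemma mu_k: "mu (k i) = bw k i" unfolding mu_of_def by (simp add: inv_f_f[OF inj_k])

lemma mu_off: "d \<notin> range k \<Longrightarrow> mu d = 0" unfolding mu_of_def by simp

lemma aw_nn: "0 \<le> aw k i" unfolding aw_def by simp

lemma aw_le: "1 \<le> i \<Longrightarrow> aw k i \<le> (1/2)^i"
  using k1[of i] unfolding aw_def by (simp add: divide_le_eq_1 field_simps)

lemma geo_half: "(\<lambda>n. (1/2::real)^Suc n) sums 1"
proof -
  have "(\<lambda>n. (1/2::real)^n) sums (1 / (1 - 1/2))" by (rule geometric_sums) simp
  hence "(\<lambda>n. 1/2 * (1/2::real)^n) sums (1/2 * (1 / (1 - 1/2)))" by (rule sums_mult)
  thus ?thesis by simp
qed

lemma summ: "summable (\<lambda>n. aw k (Suc n))"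
proof (rule summable_comparison_test'[OF sums_summable[OF geo_half], of 0])
  fix n :: nat
  have "aw k (Suc n) \<le> (1/2)^Suc n" by (rule aw_le) simp
  thus "norm (aw k (Suc n)) \<le> (1/2)^Suc n" using aw_nn[of "Suc n"] by simp
qed

lemma S_le: "(\<Sum>n. aw k (Suc n)) \<le> 1"
proof -
  have "(\<Sum>n. aw k (Suc n)) \<le> (\<Sum>n. (1/2::real)^Suc n)"
    by (rule suminf_le[OF _ summ sums_summable[OF geo_half]]) (rule aw_le, simp)
  thus ?thesis using sums_unique[OF geo_half] by simp
qed

lemma bw_nn: "0 \<le> bw k i" unfolding bw_def using S_le aw_nn by auto

lemma mu_nn: "0 \<le> mu d" unfolding mu_of_def using bw_nn by auto

lemma bw_sums: "bw k sums 1"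
proof -
  have "(\<lambda>n. bw k (Suc n)) sums (\<Sum>n. aw k (Suc n))"
    unfolding bw_def using summ by (simp add: summable_sums)
  hence "bw k sums ((\<Sum>n. aw k (Suc n)) + bw k 0)" by (simp add: sums_Suc_iff)
  thus ?thesis unfolding bw_def by simp
qed

lemma mu_sums: "mu sums 1"
proof -
  have "(\<lambda>n. mu (k n)) sums 1" unfolding mu_k using bw_sums .
  thus ?thesis using sums_mono_reindex[OF sm, of mu] mu_off by blast
qed

definition gg where "gg i = (if i = 0 then 0 else (1/2::real)^i)"

lemma kmu: "real (k i) * mu (k i) = gg i"
proof (cases "i = 0")
  case True then show ?thesis using k0 by (simp add: gg_def)
next
  case False
  hence "1 \<le> k i" using k1[of i] by simp
  then show ?thesis using False unfolding mu_k bw_def gg_def aw_def by simp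
qed

lemma gg_sums: "gg sums 1"
proof -
  have "(\<lambda>n. gg (Suc n)) sums 1" unfolding gg_def using geo_half by simp
  hence "gg sums (1 + gg 0)" by (simp add: sums_Suc_iff)
  thus ?thesis by (simp add: gg_def)
qed

lemma critical: "critical mu"
proof -
  have "(\<lambda>n. real (k n) * mu (k n)) sums 1" unfolding kmu by (rule gg_sums)
  hence "(\<lambda>d. real d * mu d) sums 1"
    using sums_mono_reindex[OF sm, of "\<lambda>d. real d * mu d"] mu_off by auto
  thus ?thesis unfolding critical_def offspring_distr_def using mu_nn mu_sums by blast
qed

lemma gg_partial: "(\<Sum>i<Suc j. gg i) = 1 - (1/2)^j"
proof (induction j)
  case 0 then show ?case by (simp add: gg_def)
next
  case (Suc j) then show ?case by (simp add: gg_def)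
qed

lemma mean_j: "(\<Sum>d<k (Suc j). real d * mu d) = 1 - (1/2)^j"
proof -
  have "(\<Sum>d<k (Suc j). real d * mu d) = (\<Sum>i<Suc j. real (k i) * mu (k i))"
    by (rule sum_below[OF sm]) (simp add: mu_off)
  thus ?thesis unfolding kmu gg_partial .
qed

lemma mass_j: "(\<Sum>d<k j. mu d) = 1 - (\<Sum>n. bw k (n + j))"
proof -
  have "(\<Sum>d<k j. mu d) = (\<Sum>i<j. bw k i)"
    unfolding mu_k[symmetric] by (rule sum_below[OF sm]) (simp add: mu_off)
  moreover have "suminf (bw k) = (\<Sum>n. bw k (n + j)) + (\<Sum>i<j. bw k i)"
    by (rule suminf_split_initial_segment[OF sums_summable[OF bw_sums]])
  ultimately show ?thesis using sums_unique[OF bw_sums] by simp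
qed

lemma tail_nn: "0 \<le> (\<Sum>n. bw k (n + j))"
  by (rule suminf_nonneg[OF summable_ignore_initial_segment[OF sums_summable[OF bw_sums]]]) (rule bw_nn)

lemma tail_le: "(\<Sum>n. bw k (n + Suc j)) \<le> (1/2)^j / real (k (Suc j))"
proof -
  define K where "K = real (k (Suc j))"
  have Kpos: "0 < K" unfolding K_def using k1[of "Suc j"] by simp
  have gs: "(\<lambda>n. (1/2::real)^Suc j * (1/2)^n / K) sums ((1/2)^Suc j * (1 / (1 - 1/2)) / K)"
    by (intro sums_divide sums_mult geometric_sums) simp
  have "(\<Sum>n. bw k (n + Suc j)) \<le> (\<Sum>n. (1/2::real)^Suc j * (1/2)^n / K)"
  proof (rule suminf_le[OF _ summable_ignore_initial_segment[OF sums_summable[OF bw_sums]] sums_summable[OF gs]])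
    fix n
    have "k (Suc j) \<le> k (n + Suc j)" using sm by (simp add: strict_mono_less_eq)
    hence "K \<le> real (k (n + Suc j))" unfolding K_def by simp
    hence "aw k (n + Suc j) \<le> (1/2)^(n + Suc j) / K"
      unfolding aw_def using Kpos by (intro divide_left_mono) auto
    thus "bw k (n + Suc j) \<le> (1/2)^Suc j * (1/2)^n / K"
      unfolding bw_def by (simp add: power_add mult.commute)
  qed
  also have "\<dots> = (1/2)^j / K" using sums_unique[OF gs] by simp
  finally show ?thesis unfolding K_def .
qed

end

context kseq_ctx begin

lemma psi_le: "(\<Sum>d<k (Suc j). mu d * exp (th * (real d - 1))) \<le> Psi k (Suc j) th"
proof -
  have "(\<Sum>d<k (Suc j). mu d * exp (th * (real d - 1))) = (\<Sum>i<Suc j. mu (k i) * exp (th * (real (k i) - 1)))"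
    by (rule sum_below[OF sm]) (simp add: mu_off)
  also have "\<dots> = bw k 0 * exp (- th) + (\<Sum>i<j. aw k (Suc i) * exp (th * (real (k (Suc i)) - 1)))"
    by (subst sum.lessThan_Suc_shift) (simp add: mu_k mu_k[of 0, unfolded k0] bw_def k0)
  also have "\<dots> \<le> (1 - (\<Sum>i<j. aw k (Suc i))) * exp (- th) + (\<Sum>i<j. aw k (Suc i) * exp (th * (real (k (Suc i)) - 1)))"
  proof -
    have "(\<Sum>i<j. aw k (Suc i)) \<le> (\<Sum>n. aw k (Suc n))"
      by (rule sum_le_suminf[OF summ]) (auto intro: aw_nn)
    hence "bw k 0 \<le> 1 - (\<Sum>i<j. aw k (Suc i))" unfolding bw_def by simp
    thus ?thesis by (intro add_right_mono mult_right_mono) auto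
  qed
  also have "\<dots> = Psi k (Suc j) th"
    unfolding Psi_def shift1[of _ j] ..
  finally show ?thesis .
qed

end

theorem mainTheorem15:
  fixes f :: "nat \<Rightarrow> real"
  assumes "\<And>n. f n > 0"
    and "filterlim f at_top sequentially"
  shows "\<exists>mu. critical mu \<and>
           (\<forall>\<epsilon>>0. \<forall>N. \<exists>n\<ge>N. size_prob mu n > 0 \<and>
              cond_prob mu n (\<lambda>t. real (maxdeg t) > real n / f n) > 1 - \<epsilon>)"
proof -
  define k where "k = kseq f"
  have kc: "kcond f (Suc j) k (k (Suc j))" for j
    unfolding k_def by (rule kseq_cond[OF assms(2)])
  have kSuc: "k j < k (Suc j)" for j using kc[of j] unfolding kcond_def by simp
  have sm: "strict_mono k" using kSuc by (simp add: strict_mono_Suc_iff)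
  have k0: "k 0 = 0" unfolding k_def by (rule kseq0)
  have k1: "1 \<le> k i" if i1: "1 \<le> i" for i
  proof -
    obtain i' where "i = Suc i'" using i1 by (cases i) auto
    thus ?thesis using kSuc[of i'] by simp
  qed
  interpret kseq_ctx k using sm k0 k1 by unfold_locales auto
  have main: "\<exists>n\<ge>N. size_prob mu n > 0 \<and> cond_prob mu n (\<lambda>t. real (maxdeg t) > real n / f n) > 1 - eps"
    if eps: "eps > 0" for eps :: real and N :: nat
  proof -
    define j' where "j' = max N (nat \<lceil>1 / eps\<rceil>)"
    define j where "j = Suc j'"
    define K where "K = k j"
    define tau where "tau = (1/2::real)^j'"
    define eps' where "eps' = 1 / (real j + 1)"
    have "1 / eps \<le> real j'" unfolding j'_def by linarith
    hence "1 / eps < real j + 1" unfolding j_def by simp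
    hence "1 / (real j + 1) < eps" using eps by (simp add: field_simps)
    hence eps'le: "eps' \<le> eps" unfolding eps'_def by simp
    have eps'pos: "0 < eps'" unfolding eps'_def by simp
    have KN: "N \<le> K" unfolding K_def using strict_mono_imp_increasing[OF sm, of j] unfolding j_def j'_def by simp
    have kcj: "kcond f j k K" unfolding j_def K_def by (rule kc)
    hence K12: "12 \<le> K" and fbig: "\<And>n. K \<le> n \<Longrightarrow> 2 + 2^j < f n" unfolding kcond_def by auto
    from kcj obtain th where th: "Psi k j th < 1"
      "exp th * Psi k j th ^ K / (1 - Psi k j th) \<le> eps' * (exp (-4) / 3 * ((1/2)^j / real K))"
      unfolding kcond_def eps'_def by auto
    have Kpos: "0 < real K" using K12 by simp
    interpret stage mu K tau
    proof
      show "\<And>d. 0 \<le> mu d" by (rule mu_nn)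
      show "12 \<le> K" by (rule K12)
      show "0 < tau" "tau \<le> 1" unfolding tau_def by (auto simp: power_le_one)
      show "(\<Sum>d<K. real d * mu d) = 1 - tau" unfolding K_def j_def tau_def by (rule mean_j)
      have tl: "(\<Sum>n. bw k (n + j)) \<le> tau / real K" unfolding tau_def K_def j_def by (rule tail_le)
      show "1 - tau / real K \<le> (\<Sum>d<K. mu d)" unfolding K_def mass_j using tl unfolding K_def by simp
      show "(\<Sum>d<K. mu d) \<le> 1" unfolding K_def mass_j using tail_nn by simp
    qed
    define psi where "psi = (\<Sum>d<K. mu d * exp (th * (real d - 1)))"
    have psiP: "psi \<le> Psi k j th" unfolding psi_def K_def j_def by (rule psi_le)
    have psi_nn: "0 \<le> psi" unfolding psi_def by (auto intro!: sum_nonneg mult_nonneg_nonneg mu_nn)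
    have muK: "mu K = (1/2)^j / real K" unfolding K_def using mu_k[of j] unfolding bw_def aw_def j_def by simp
    have "\<exists>n\<ge>K. size_prob mu n > 0 \<and> cond_prob mu n (\<lambda>t. real (maxdeg t) > real n / f n) > 1 - eps'"
    proof (rule stage_final[where T="K * 2^j" and th=th])
      show "2 * real K / tau \<le> real (K * 2^j)"
      proof -
        have t: "tau = 1 / 2^j'" unfolding tau_def by (simp add: power_one_over)
        have "2 * real K / tau = 2 * real K * 2^j'" unfolding t by simp
        also have "\<dots> = real (K * 2^j)" unfolding j_def by simp
        finally show ?thesis by simp
      qed
      show "real n / f n < real K" if "K \<le> n" "n \<le> 1 + K * 2 ^ j" for n
      proof -
        have fn: "2 + 2^j < f n" using fbig[OF that(1)] .
        have "real n \<le> real (1 + K * 2^j)" using that(2) by (simp only: of_nat_le_iff)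
        also have "\<dots> = 1 + real K * 2^j" by simp
        also have "\<dots> < real K * (2 + 2^j)" using Kpos K12 by (simp add: algebra_simps)
        also have "\<dots> < real K * f n" using fn Kpos by simp
        finally have nk: "real n < real K * f n" .
        have fpos: "0 < f n" by (rule assms(1))
        show ?thesis unfolding pos_divide_less_eq[OF fpos] using nk by (simp only: mult.commute)
      qed
      show "(\<Sum>d<K. mu d * exp (th * (real d - 1))) < 1" using psiP th(1) unfolding psi_def by simp
      have "psi ^ K / (1 - psi) \<le> Psi k j th ^ K / (1 - Psi k j th)"
        using psiP psi_nn th(1) by (intro frac_le power_mono) auto
      hence "exp th * (psi ^ K / (1 - psi)) \<le> exp th * (Psi k j th ^ K / (1 - Psi k j th))"
        by (rule mult_left_mono) simp
      thus "exp th * (\<Sum>d<K. mu d * exp (th * (real d - 1))) ^ K / (1 - (\<Sum>d<K. mu d * exp (th * (real d - 1))))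
          \<le> eps' * (exp (- 4) / 3 * mu K)"
        using th(2) unfolding psi_def muK by simp
      show "0 < eps'" by (rule eps'pos)
      show "0 < mu K" unfolding muK using Kpos by simp
    qed
    then obtain n where "n \<ge> K" "size_prob mu n > 0" "cond_prob mu n (\<lambda>t. real (maxdeg t) > real n / f n) > 1 - eps'"
      by blast
    thus ?thesis using KN eps'le by (intro exI[of _ n]) auto
  qed
  show ?thesis using critical main by blast
qed


end
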